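(* Consider any run of Algorithm 1 (described in the context) under the standing assumption. The number of successful iterations performed before an $(\epsilon_g,\epsilon_H)$-stationary point is reached satisfies \[ |\mathcal{S}|\ \le\ \Big\lfloor \mathcal{C}_{\mathcal S}\max\{\epsilon_H^{-1},\ \epsilon_g^{-2}\epsilon_H,\ \epsilon_H^{-3}\}\Big\rfloor+1, \qquad \mathcal{C}_{\mathcal S}:=\tfrac{4(f_0-f_{\rm low})}{\eta}\max\Big\{\tfrac{1}{\delta_0^2},\ \tfrac{L_H^2}{9\gamma_1^2(1-\eta)^2},\ 1+2L_H\Big\}. \]
   Context: Let $f:\mathbb{R}^n\to\mathbb{R}$ with gradient $g=\nabla f$ and Hessian $H=\nabla^2 f$; $\|\cdot\|$ is the Euclidean norm and $\lambda_{\min}(\cdot)$ the smallest eigenvalue of a symmetric matrix. A point $x$ is $(\epsilon_g,\epsilon_H)$-stationary if $\|g(x)\|\le\epsilon_g$ and $\lambda_{\min}(H(x))\ge-\epsilon_H$. Write $f_k=f(x_k)$, $g_k=g(x_k)$, $H_k=H(x_k)$ and $m_k(x):=f_k+g_k^T(x-x_k)+\tfrac12(x-x_k)^TH_k(x-x_k)$. Algorithm 1 (exact trust-region Newton method). Inputs: tolerances $\epsilon_g,\epsilon_H>0$; parameters $\gamma_1\in(0,1)$, $\gamma_2\in[1,\infty)$, $\psi\in(1/\gamma_2,1]$; $x_0\in\mathbb{R}^n$; $\delta_0>0$; $\delta_{\max}\ge\delta_0$; $\eta\in(0,1)$. For $k=0,1,2,\dots$: evaluate $g_k,H_k$; if $\|g_k\|\le\epsilon_g$,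 compute $\lambda_k=\lambda_{\min}(H_k)$ and, if $\lambda_k\ge-\epsilon_H$, return $x_k$ (terminate). Otherwise compute $s_k$ as a global solution of $\min_{s}\ m_k(x_k+s)+\tfrac12\epsilon_H\|s\|^2$ subject to $\|s\|\le\delta_k$. Set $\rho_k=\frac{f_k-f(x_k+s_k)}{m_k(x_k)-m_k(x_k+s_k)}$. If $\rho_k\ge\eta$: $x_{k+1}=x_k+s_k$, and $\delta_{k+1}=\min\{\gamma_2\delta_k,\delta_{\max}\}$ if $\|s_k\|\ge\psi\delta_k$, else $\delta_{k+1}=\delta_k$. If $\rho_k<\eta$: $x_{k+1}=x_k$ and $\delta_{k+1}=\gamma_1\|s_k\|$. $\mathcal{K}$ is the set of indices $k$ such that iteration $k$ is completed without termination; $\mathcal{S}=\{k\in\mathcal{K}:\rho_k\ge\eta\}$ (successful iterations). Standing assumption: the sequence $\{f_k\}$ is bounded below by some $f_{\rm low}\in\mathbb{R}$, and all segments $[x_k,x_k+s_k]$ lie in an open set on which $f$ is twice continuously differentiable with gradient Lipschitz continuous with constant $L_g>0$ and Hessian Lipschitz continuous with constant $L_H>0$. *)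

theory Defs
  imports "HOL-Analysis.Analysis"
begin

definition lambda_min :: "real^'n^'n \<Rightarrow> real" where
  "lambda_min A = Min {l. \<exists>v. v \<noteq> 0 \<and> A *v v = l *\<^sub>R v}"

definition tr_model ::
  "(real^'n \<Rightarrow> real) \<Rightarrow> (real^'n \<Rightarrow> real^'n) \<Rightarrow> (real^'n \<Rightarrow> real^'n^'n)
     \<Rightarrow> real^'n \<Rightarrow> real^'n \<Rightarrow> real" where
  "tr_model f g H x y = f x + g x \<bullet> (y - x) + (1/2) * ((y - x) \<bullet> (H x *v (y - x)))"

definition stationary ::
  "(real^'n \<Rightarrow> real^'n) \<Rightarrow> (real^'n \<Rightarrow> real^'n^'n) \<Rightarrow> real \<Rightarrow> real \<Rightarrow> real^'n \<Rightarrow> bool" where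
  "stationary g H eg eH x \<longleftrightarrow> norm (g x) \<le> eg \<and> lambda_min (H x) \<ge> - eH"

end

theory Submission
  imports Defs
begin


lemma deriv_bound:
  fixes \<phi> \<phi>' :: "real \<Rightarrow> real"
  assumes T: "0 \<le> T" and z: "\<phi> 0 = 0"
    and d: "\<And>t. 0 \<le> t \<Longrightarrow> t \<le> T \<Longrightarrow> (\<phi> has_real_derivative \<phi>' t) (at t)"
    and b: "\<And>t. 0 \<le> t \<Longrightarrow> t \<le> T \<Longrightarrow> \<bar>\<phi>' t\<bar> \<le> c * t ^ m"
  shows "\<bar>\<phi> T\<bar> \<le> c * T ^ Suc m / real (Suc m)"
proof -
  let ?p = "\<lambda>t. c * t ^ Suc m / real (Suc m)"
  have dp: "(?p has_real_derivative c * t ^ m) (at t)" for t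
  proof -
    have "((\<lambda>t. t ^ Suc m) has_real_derivative real (Suc m) * t ^ m) (at t)"
      using DERIV_pow[of "Suc m" t] by simp
    from DERIV_cdivide[OF DERIV_cmult[OF this, of c], of "real (Suc m)"]
    show ?thesis by simp
  qed
  have "(\<lambda>t. \<phi> t - ?p t) T \<le> (\<lambda>t. \<phi> t - ?p t) 0"
    apply (rule DERIV_nonpos_imp_nonincreasing[OF T])
    subgoal for t
      apply (rule exI[of _ "\<phi>' t - c * t^m"])
      using DERIV_diff[OF d[of t] dp[of t]] b[of t] by auto
    done
  moreover have "(\<lambda>t. \<phi> t + ?p t) 0 \<le> (\<lambda>t. \<phi> t + ?p t) T"
    apply (rule DERIV_nonneg_imp_nondecreasing[OF T])
    subgoal for t
      apply (rule exI[of _ "\<phi>' t + c * t^m"])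
      using DERIV_add[OF d[of t] dp[of t]] b[of t] by auto
    done
  ultimately show ?thesis using z by auto
qed

lemma quad_zero:
  fixes a b e :: real
  assumes e: "e > 0" and h: "\<And>t. \<bar>t\<bar> \<le> e \<Longrightarrow> a * t + b * t\<^sup>2 \<ge> 0"
  shows "a = 0"
proof (rule ccontr)
  assume a: "a \<noteq> 0"
  define s where "s = min (1 / (\<bar>b\<bar> + 1)) (e / (\<bar>a\<bar> + 1))"
  have s0: "s > 0" using e by (auto simp: s_def)
  have sb: "s * \<bar>b\<bar> < 1"
  proof -
    have "s \<le> 1 / (\<bar>b\<bar> + 1)" by (simp add: s_def)
    hence "s * (\<bar>b\<bar>+1) \<le> 1" by (simp add: field_simps)
    thus ?thesis using s0 by (simp add: algebra_simps)
  qed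
  have se: "s * \<bar>a\<bar> \<le> e"
  proof -
    have "s \<le> e / (\<bar>a\<bar> + 1)" by (simp add: s_def)
    hence "s * (\<bar>a\<bar>+1) \<le> e" by (simp add: field_simps)
    thus ?thesis using s0 by (simp add: algebra_simps)
  qed
  have "a * (- a * s) + b * (- a * s)\<^sup>2 \<ge> 0"
    apply (rule h) using se s0 by (simp add: abs_mult mult.commute)
  hence "a\<^sup>2 * s * (b * s - 1) \<ge> 0" by (simp add: power2_eq_square algebra_simps)
  moreover have "b * s - 1 < 0" using sb s0 by (smt (verit) mult.commute mult_left_mono abs_ge_self)
  moreover have "a\<^sup>2 * s > 0" using a s0 by simp
  ultimately show False using mult_pos_neg[of "a\<^sup>2 * s" "b * s - 1"] by linarith
qed

lemma seg_pt: "0 \<le> t \<Longrightarrow> t \<le> 1 \<Longrightarrow> x + t *\<^sub>R s \<in> closed_segment x (x + s)"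
  unfolding closed_segment_def by (auto intro!: exI[of _ t] simp: algebra_simps)

lemma Hdiff_bound:
  fixes A B :: "real^'n^'n"
  assumes "onorm (\<lambda>v. (A - B) *v v) \<le> L"
  shows "norm ((A - B) *v v) \<le> L * norm v"
proof -
  have "norm ((A - B) *v v) \<le> onorm (\<lambda>v. (A - B) *v v) * norm v"
    by (rule onorm) simp
  also have "\<dots> \<le> L * norm v" using assms by (simp add: mult_right_mono)
  finally show ?thesis .
qed

lemma grad_taylor:
  fixes g :: "real^'n \<Rightarrow> real^'n" and H :: "real^'n \<Rightarrow> real^'n^'n"
  assumes seg: "closed_segment x (x+s) \<subseteq> U"
    and g_deriv: "\<And>y. y \<in> U \<Longrightarrow> (g has_derivative (\<lambda>h. H y *v h)) (at y)"
    and H_lip: "\<And>y z. y \<in> U \<Longrightarrow> z \<in> U \<Longrightarrow> onorm (\<lambda>v. (H y - H z) *v v) \<le> LH * norm (y - z)"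
    and T: "0 \<le> T" "T \<le> 1"
  shows "\<bar>w \<bullet> (g (x + T *\<^sub>R s) - g x - T *\<^sub>R (H x *v s))\<bar> \<le> (LH * (norm s)\<^sup>2 * norm w) * T ^ Suc 1 / real (Suc 1)"
proof (rule deriv_bound[where \<phi>="\<lambda>t. w \<bullet> (g (x + t *\<^sub>R s) - g x - t *\<^sub>R (H x *v s))"
     and \<phi>'="\<lambda>t. w \<bullet> ((H (x + t *\<^sub>R s) - H x) *v s)", OF T(1)])
  show "w \<bullet> (g (x + 0 *\<^sub>R s) - g x - 0 *\<^sub>R (H x *v s)) = 0" by simp
next
  fix t assume t: "0 \<le> t" "t \<le> T"
  have xt: "x + t *\<^sub>R s \<in> U" using seg seg_pt[of t x s] t T by auto
  have x0: "x \<in> U" using seg by auto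
  have d1: "((\<lambda>t. x + t *\<^sub>R s) has_derivative (\<lambda>h. h *\<^sub>R s)) (at t)"
    by (auto intro!: derivative_eq_intros)
  have d2: "((\<lambda>t. g (x + t *\<^sub>R s)) has_derivative (\<lambda>h. H (x + t *\<^sub>R s) *v (h *\<^sub>R s))) (at t)"
    using diff_chain_at[OF d1 g_deriv[OF xt]] by (simp add: o_def)
  have d3: "((\<lambda>t. w \<bullet> (g (x + t *\<^sub>R s) - g x - t *\<^sub>R (H x *v s))) has_derivative
      (\<lambda>h. w \<bullet> (H (x + t *\<^sub>R s) *v (h *\<^sub>R s) - h *\<^sub>R (H x *v s)))) (at t)"
    by (auto intro!: derivative_eq_intros d2)
  show "((\<lambda>t. w \<bullet> (g (x + t *\<^sub>R s) - g x - t *\<^sub>R (H x *v s))) has_real_derivative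
      w \<bullet> ((H (x + t *\<^sub>R s) - H x) *v s)) (at t)"
    unfolding has_field_derivative_def
    using d3 apply (simp add: matrix_vector_mult_scaleR algebra_simps inner_diff_right)
    apply (erule has_derivative_eq_rhs) by (auto simp: fun_eq_iff algebra_simps)
  have "\<bar>w \<bullet> ((H (x + t *\<^sub>R s) - H x) *v s)\<bar> \<le> norm w * norm ((H (x + t *\<^sub>R s) - H x) *v s)"
    by (rule Cauchy_Schwarz_ineq2)
  also have "\<dots> \<le> norm w * ((LH * norm (x + t *\<^sub>R s - x)) * norm s)"
    by (rule mult_left_mono[OF Hdiff_bound[OF H_lip[OF xt x0]]]) simp
  also have "\<dots> = (LH * (norm s)\<^sup>2 * norm w) * t ^ 1" using t by (simp add: power2_eq_square)
  finally show "\<bar>w \<bullet> ((H (x + t *\<^sub>R s) - H x) *v s)\<bar> \<le> (LH * (norm s)\<^sup>2 * norm w) * t ^ 1" .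
qed

lemma f_taylor:
  fixes f :: "real^'n \<Rightarrow> real" and g :: "real^'n \<Rightarrow> real^'n" and H :: "real^'n \<Rightarrow> real^'n^'n"
  assumes seg: "closed_segment x (x+s) \<subseteq> U"
    and f_deriv: "\<And>y. y \<in> U \<Longrightarrow> (f has_derivative (\<lambda>h. g y \<bullet> h)) (at y)"
    and g_deriv: "\<And>y. y \<in> U \<Longrightarrow> (g has_derivative (\<lambda>h. H y *v h)) (at y)"
    and H_lip: "\<And>y z. y \<in> U \<Longrightarrow> z \<in> U \<Longrightarrow> onorm (\<lambda>v. (H y - H z) *v v) \<le> LH * norm (y - z)"
  shows "\<bar>f (x + s) - tr_model f g H x (x + s)\<bar> \<le> LH * norm s ^ 3 / 6"
proof -
  have "\<bar>(\<lambda>t. f (x + t *\<^sub>R s) - f x - t * (g x \<bullet> s) - t\<^sup>2 / 2 * (s \<bullet> (H x *v s))) 1\<bar>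
     \<le> (LH * norm s ^ 3 / 2) * 1 ^ Suc 2 / real (Suc 2)"
  proof (rule deriv_bound[where \<phi>'="\<lambda>t. s \<bullet> (g (x + t *\<^sub>R s) - g x - t *\<^sub>R (H x *v s))"])
    fix t :: real assume t: "0 \<le> t" "t \<le> 1"
    have xt: "x + t *\<^sub>R s \<in> U" using seg seg_pt[of t x s] t by auto
    have d1: "((\<lambda>t. x + t *\<^sub>R s) has_derivative (\<lambda>h. h *\<^sub>R s)) (at t)"
      by (auto intro!: derivative_eq_intros)
    have d2: "((\<lambda>t. f (x + t *\<^sub>R s)) has_derivative (\<lambda>h. g (x + t *\<^sub>R s) \<bullet> (h *\<^sub>R s))) (at t)"
      using diff_chain_at[OF d1 f_deriv[OF xt]] by (simp add: o_def)
    have d3: "((\<lambda>t. f (x + t *\<^sub>R s) - f x - t * (g x \<bullet> s) - t\<^sup>2 / 2 * (s \<bullet> (H x *v s))) has_derivative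
      (\<lambda>h. g (x + t *\<^sub>R s) \<bullet> (h *\<^sub>R s) - h * (g x \<bullet> s) - (2 * t * h) / 2 * (s \<bullet> (H x *v s)))) (at t)"
      by (auto intro!: derivative_eq_intros d2 simp: power2_eq_square algebra_simps)
    show "((\<lambda>t. f (x + t *\<^sub>R s) - f x - t * (g x \<bullet> s) - t\<^sup>2 / 2 * (s \<bullet> (H x *v s))) has_real_derivative
       s \<bullet> (g (x + t *\<^sub>R s) - g x - t *\<^sub>R (H x *v s))) (at t)"
      unfolding has_field_derivative_def
      using d3 apply (rule has_derivative_eq_rhs)
      by (auto simp: fun_eq_iff algebra_simps inner_commute)
    have "\<bar>s \<bullet> (g (x + t *\<^sub>R s) - g x - t *\<^sub>R (H x *v s))\<bar> \<le> (LH * (norm s)\<^sup>2 * norm s) * t ^ Suc 1 / real (Suc 1)"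
      by (rule grad_taylor[OF seg g_deriv H_lip t]) auto
    thus "\<bar>s \<bullet> (g (x + t *\<^sub>R s) - g x - t *\<^sub>R (H x *v s))\<bar> \<le> (LH * norm s ^ 3 / 2) * t ^ 2"
      by (simp add: power2_eq_square power3_eq_cube)
  qed auto
  thus ?thesis unfolding tr_model_def by (simp add: inner_commute algebra_simps)
qed

lemma line_deriv:
  fixes f :: "real^'n \<Rightarrow> real" and g :: "real^'n \<Rightarrow> real^'n"
  assumes "p + a *\<^sub>R u \<in> U"
    and f_deriv: "\<And>y. y \<in> U \<Longrightarrow> (f has_derivative (\<lambda>h. g y \<bullet> h)) (at y)"
  shows "((\<lambda>a. f (p + a *\<^sub>R u)) has_real_derivative (g (p + a *\<^sub>R u) \<bullet> u)) (at a)"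
proof -
  have d1: "((\<lambda>t. p + t *\<^sub>R u) has_derivative (\<lambda>h. h *\<^sub>R u)) (at a)"
    by (auto intro!: derivative_eq_intros)
  have d2: "((\<lambda>t. f (p + t *\<^sub>R u)) has_derivative (\<lambda>h. g (p + a *\<^sub>R u) \<bullet> (h *\<^sub>R u))) (at a)"
    using diff_chain_at[OF d1 f_deriv[OF assms(1)]] by (simp add: o_def)
  show ?thesis unfolding has_field_derivative_def
    using d2 apply (rule has_derivative_eq_rhs) by (auto simp: fun_eq_iff)
qed

lemma small_imp_zero:
  fixes d K t0 :: real
  assumes "t0 > 0" "\<And>t. 0 < t \<Longrightarrow> t < t0 \<Longrightarrow> \<bar>d\<bar> \<le> K * t"
  shows "d = 0"
proof (rule ccontr)
  assume "d \<noteq> 0"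
  hence dp: "\<bar>d\<bar> > 0" by simp
  have K0: "K \<ge> 0"
  proof (rule ccontr)
    assume "\<not> K \<ge> 0"
    hence "K * (t0/2) < 0" using assms(1) by (simp add: mult_neg_pos)
    thus False using assms(2)[of "t0/2"] assms(1) dp by simp
  qed
  define t where "t = min (t0/2) (\<bar>d\<bar> / (2 * (K + 1)))"
  have t0: "0 < t" "t < t0" using assms(1) dp K0 by (auto simp: t_def)
  have "t \<le> \<bar>d\<bar> / (2 * (K + 1))" by (simp add: t_def)
  hence "t * (2 * (K+1)) \<le> \<bar>d\<bar>" using K0 by (simp add: pos_le_divide_eq)
  moreover have "K * t \<ge> 0" using K0 t0 by simp
  moreover have "t * (2 * (K+1)) = K * t + K * t + 2 * t" by (simp add: algebra_simps)
  ultimately have "K * t < \<bar>d\<bar>" using t0 by linarith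
  thus False using assms(2)[OF t0] by simp
qed



lemma hess_symm:
  fixes f :: "real^'n \<Rightarrow> real" and g :: "real^'n \<Rightarrow> real^'n" and H :: "real^'n \<Rightarrow> real^'n^'n"
  assumes U: "open U" and y: "y \<in> U"
    and f_deriv: "\<And>y. y \<in> U \<Longrightarrow> (f has_derivative (\<lambda>h. g y \<bullet> h)) (at y)"
    and g_deriv: "\<And>y. y \<in> U \<Longrightarrow> (g has_derivative (\<lambda>h. H y *v h)) (at y)"
    and H_lip: "\<And>y z. y \<in> U \<Longrightarrow> z \<in> U \<Longrightarrow> onorm (\<lambda>v. (H y - H z) *v v) \<le> LH * norm (y - z)"
    and LH: "LH \<ge> 0"
  shows "u \<bullet> (H y *v v) = v \<bullet> (H y *v u)"
proof -
  obtain r where r: "r > 0" "ball y r \<subseteq> U" using U y open_contains_ball by blast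
  define N where "N = norm u + norm v + 1"
  define t0 where "t0 = r / N"
  have N0: "N > 0" unfolding N_def by (smt (verit) norm_ge_zero)
  have t00: "t0 > 0" using r N0 by (simp add: t0_def)
  define C where "C = LH * (norm v)\<^sup>2 * norm u / 2 + LH * (norm u)\<^sup>2 * norm v"
  define C' where "C' = LH * (norm (u+v) ^ 3 + norm u ^ 3 + norm v ^ 3) / 6"
  have key: "\<bar>v \<bullet> (H y *v u) - u \<bullet> (H y *v v)\<bar> \<le> (2 * (C + C')) * t" if t: "0 < t" "t < t0" for t
  proof -
    have inball: "y + (a *\<^sub>R u + b *\<^sub>R v) \<in> ball y r" if ab: "\<bar>a\<bar> \<le> t" "\<bar>b\<bar> \<le> t" for a b
    proof -
      have "norm (a *\<^sub>R u + b *\<^sub>R v) \<le> \<bar>a\<bar> * norm u + \<bar>b\<bar> * norm v"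
        by (metis norm_scaleR norm_triangle_ineq)
      also have "\<dots> \<le> t * norm u + t * norm v" using ab by (simp add: add_mono mult_right_mono)
      also have "\<dots> < t * N" using t by (simp add: N_def algebra_simps)
      also have "\<dots> < t0 * N" using t N0 by simp
      also have "\<dots> = r" using N0 by (simp add: t0_def)
      finally show ?thesis by (metis add_diff_cancel_left' dist_commute dist_norm mem_ball)
    qed
    have segU: "closed_segment (y + (a *\<^sub>R u + b *\<^sub>R v)) (y + (a' *\<^sub>R u + b' *\<^sub>R v)) \<subseteq> U"
      if "\<bar>a\<bar> \<le> t" "\<bar>b\<bar> \<le> t" "\<bar>a'\<bar> \<le> t" "\<bar>b'\<bar> \<le> t" for a b a' b'
      using closed_segment_subset[OF inball[of a b] inball[of a' b'] convex_ball] that r(2) by blast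
    have tt: "\<bar>t\<bar> \<le> t" "\<bar>0::real\<bar> \<le> t" using t by auto
    have e1: "\<bar>f (y + t *\<^sub>R (u + v)) - tr_model f g H y (y + t *\<^sub>R (u + v))\<bar> \<le> LH * norm (t *\<^sub>R (u + v)) ^ 3 / 6"
    proof (rule f_taylor[OF _ f_deriv g_deriv H_lip])
      show "closed_segment y (y + t *\<^sub>R (u + v)) \<subseteq> U"
        using segU[OF tt(2) tt(2) tt(1) tt(1)] by (simp add: algebra_simps)
    qed auto
    have e2: "\<bar>f (y + t *\<^sub>R u) - tr_model f g H y (y + t *\<^sub>R u)\<bar> \<le> LH * norm (t *\<^sub>R u) ^ 3 / 6"
    proof (rule f_taylor[OF _ f_deriv g_deriv H_lip])
      show "closed_segment y (y + t *\<^sub>R u) \<subseteq> U"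
        using segU[OF tt(2) tt(2) tt(1) tt(2)] by (simp add: algebra_simps)
    qed auto
    have e3: "\<bar>f (y + t *\<^sub>R v) - tr_model f g H y (y + t *\<^sub>R v)\<bar> \<le> LH * norm (t *\<^sub>R v) ^ 3 / 6"
    proof (rule f_taylor[OF _ f_deriv g_deriv H_lip])
      show "closed_segment y (y + t *\<^sub>R v) \<subseteq> U"
        using segU[OF tt(2) tt(2) tt(2) tt(1)] by (simp add: algebra_simps)
    qed auto
    define \<phi> where "\<phi> = (\<lambda>a. (f (y + t *\<^sub>R v + a *\<^sub>R u) - f (y + a *\<^sub>R u)) - (f (y + t *\<^sub>R v) - f y)
        - a * (t * (u \<bullet> (H y *v v))))"
    have e4: "\<bar>\<phi> t\<bar> \<le> (C * t\<^sup>2) * t ^ Suc 0 / real (Suc 0)"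
    proof (rule deriv_bound[where \<phi>'="\<lambda>a. g (y + t *\<^sub>R v + a *\<^sub>R u) \<bullet> u - g (y + a *\<^sub>R u) \<bullet> u - t * (u \<bullet> (H y *v v))"])
      show "0 \<le> t" using t by simp
      show "\<phi> 0 = 0" by (simp add: \<phi>_def)
    next
      fix a assume a: "0 \<le> a" "a \<le> t"
      have aa: "\<bar>a\<bar> \<le> t" using a by simp
      have p1: "y + t *\<^sub>R v + a *\<^sub>R u \<in> U" using inball[OF aa tt(1)] r by (auto simp: algebra_simps)
      have p2: "y + a *\<^sub>R u \<in> U" using inball[OF aa tt(2)] r by (auto simp: algebra_simps)
      have "((\<lambda>a. (f (y + t *\<^sub>R v + a *\<^sub>R u) - f (y + a *\<^sub>R u)) - (f (y + t *\<^sub>R v) - f y)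
        - a * (t * (u \<bullet> (H y *v v)))) has_real_derivative
        (g (y + t *\<^sub>R v + a *\<^sub>R u) \<bullet> u - g (y + a *\<^sub>R u) \<bullet> u - t * (u \<bullet> (H y *v v)))) (at a)"
        by (auto intro!: derivative_eq_intros line_deriv[OF p1 f_deriv] line_deriv[OF p2 f_deriv])
      thus "(\<phi> has_real_derivative (g (y + t *\<^sub>R v + a *\<^sub>R u) \<bullet> u - g (y + a *\<^sub>R u) \<bullet> u - t * (u \<bullet> (H y *v v)))) (at a)"
        unfolding \<phi>_def .
      define z where "z = y + a *\<^sub>R u"
      have zU: "z \<in> U" using p2 by (simp add: z_def)
      have gt: "\<bar>u \<bullet> (g (z + 1 *\<^sub>R (t *\<^sub>R v)) - g z - 1 *\<^sub>R (H z *v (t *\<^sub>R v)))\<bar>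
           \<le> (LH * (norm (t *\<^sub>R v))\<^sup>2 * norm u) * 1 ^ Suc 1 / real (Suc 1)"
      proof (rule grad_taylor[OF _ g_deriv H_lip])
        show "closed_segment z (z + t *\<^sub>R v) \<subseteq> U"
          using segU[OF aa tt(2) aa tt(1)] by (simp add: z_def algebra_simps)
      qed auto
      have hb: "\<bar>u \<bullet> ((H z - H y) *v (t *\<^sub>R v))\<bar> \<le> norm u * ((LH * norm (z - y)) * norm (t *\<^sub>R v))"
        using Cauchy_Schwarz_ineq2[of u] mult_left_mono[OF Hdiff_bound[OF H_lip[OF zU y]], of "norm u" "t *\<^sub>R v"]
        by (smt (verit) norm_ge_zero)
      have "norm u * ((LH * norm (z - y)) * norm (t *\<^sub>R v)) = LH * norm u ^ 2 * norm v * (a * t)"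
        using a t by (simp add: z_def power2_eq_square)
      also have "\<dots> \<le> LH * norm u ^ 2 * norm v * (t * t)"
        apply (rule mult_left_mono) using a t LH by (auto intro: mult_right_mono)
      finally have hb2: "\<bar>u \<bullet> ((H z - H y) *v (t *\<^sub>R v))\<bar> \<le> LH * norm u ^ 2 * norm v * (t * t)"
        using hb by linarith
      have eq: "g (y + t *\<^sub>R v + a *\<^sub>R u) \<bullet> u - g (y + a *\<^sub>R u) \<bullet> u - t * (u \<bullet> (H y *v v))
         = u \<bullet> (g (z + 1 *\<^sub>R (t *\<^sub>R v)) - g z - 1 *\<^sub>R (H z *v (t *\<^sub>R v))) + u \<bullet> ((H z - H y) *v (t *\<^sub>R v))"
        by (simp add: z_def algebra_simps inner_diff_right inner_commute matrix_vector_mult_diff_rdistrib)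
      have "\<bar>g (y + t *\<^sub>R v + a *\<^sub>R u) \<bullet> u - g (y + a *\<^sub>R u) \<bullet> u - t * (u \<bullet> (H y *v v))\<bar>
         \<le> (LH * (norm (t *\<^sub>R v))\<^sup>2 * norm u) * 1 ^ Suc 1 / real (Suc 1) + LH * norm u ^ 2 * norm v * (t * t)"
        unfolding eq using gt hb2 by linarith
      also have "\<dots> = C * t\<^sup>2 * a ^ 0" using t by (simp add: C_def power2_eq_square algebra_simps)
      finally show "\<bar>g (y + t *\<^sub>R v + a *\<^sub>R u) \<bullet> u - g (y + a *\<^sub>R u) \<bullet> u - t * (u \<bullet> (H y *v v))\<bar> \<le> C * t\<^sup>2 * a ^ 0" .
    qed
    have exp: "(u + v) \<bullet> (H y *v (u + v)) = u \<bullet> (H y *v u) + u \<bullet> (H y *v v) + v \<bullet> (H y *v u) + v \<bullet> (H y *v v)"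
      by (simp add: matrix_vector_right_distrib inner_add_left inner_add_right)
    have pts: "y + t *\<^sub>R v + t *\<^sub>R u = y + t *\<^sub>R (u + v)" by (simp add: algebra_simps)
    have nrm: "LH * norm (t *\<^sub>R (u + v)) ^ 3 / 6 + LH * norm (t *\<^sub>R u) ^ 3 / 6 + LH * norm (t *\<^sub>R v) ^ 3 / 6 = C' * t ^ 3"
    proof -
      have n: "norm (t *\<^sub>R w) = t * norm w" for w :: "real^'n" using t by (simp only: norm_scaleR abs_of_pos)
      show ?thesis unfolding n by (simp add: C'_def power_mult_distrib algebra_simps)
    qed
    have T1: "tr_model f g H y (y + t *\<^sub>R (u + v)) = f y + t * (g y \<bullet> u) + t * (g y \<bullet> v)
       + t * t / 2 * (u \<bullet> (H y *v u) + u \<bullet> (H y *v v) + v \<bullet> (H y *v u) + v \<bullet> (H y *v v))"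
      unfolding tr_model_def exp[symmetric] by (simp add: matrix_vector_mult_scaleR inner_add_right algebra_simps)
    have T2: "tr_model f g H y (y + t *\<^sub>R u) = f y + t * (g y \<bullet> u) + t * t / 2 * (u \<bullet> (H y *v u))"
      unfolding tr_model_def by (simp add: matrix_vector_mult_scaleR)
    have T3: "tr_model f g H y (y + t *\<^sub>R v) = f y + t * (g y \<bullet> v) + t * t / 2 * (v \<bullet> (H y *v v))"
      unfolding tr_model_def by (simp add: matrix_vector_mult_scaleR)
    have P: "\<phi> t = f (y + t *\<^sub>R (u + v)) - f (y + t *\<^sub>R u) - f (y + t *\<^sub>R v) + f y - t * t * (u \<bullet> (H y *v v))"
      unfolding \<phi>_def pts by simp
    have e4': "\<bar>\<phi> t\<bar> \<le> C * t ^ 3" using e4 by (simp add: power2_eq_square power3_eq_cube)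
    have "\<bar>t * t / 2 * (v \<bullet> (H y *v u) - u \<bullet> (H y *v v))\<bar> \<le> C * t ^ 3 + C' * t ^ 3"
      using e1 e2 e3 e4' nrm unfolding T1 T2 T3 P abs_le_iff by (simp add: algebra_simps)
    hence "t * t / 2 * \<bar>v \<bullet> (H y *v u) - u \<bullet> (H y *v v)\<bar> \<le> t * t / 2 * ((2 * (C + C')) * t)"
    proof -
      have ab: "\<bar>t * t / 2 * (v \<bullet> (H y *v u) - u \<bullet> (H y *v v))\<bar> = t * t / 2 * \<bar>v \<bullet> (H y *v u) - u \<bullet> (H y *v v)\<bar>"
        using t by (simp add: abs_mult)
      have eq: "C * t ^ 3 + C' * t ^ 3 = t * t / 2 * ((2 * (C + C')) * t)" by (simp add: power3_eq_cube algebra_simps)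
      show ?thesis using ab eq \<open>\<bar>t * t / 2 * (v \<bullet> (H y *v u) - u \<bullet> (H y *v v))\<bar> \<le> C * t ^ 3 + C' * t ^ 3\<close> by linarith
    qed
    thus ?thesis using t by (simp add: mult_le_cancel_left_pos)
  qed
  have "v \<bullet> (H y *v u) - u \<bullet> (H y *v v) = 0"
    by (rule small_imp_zero[OF t00 key])
  thus ?thesis by simp
qed



lemma eig_finite:
  fixes A :: "real^'n^'n"
  assumes symm: "\<And>u v. u \<bullet> (A *v v) = v \<bullet> (A *v u)"
  shows "finite {l. \<exists>v. v \<noteq> 0 \<and> A *v v = l *\<^sub>R v}"
proof (rule ccontr)
  let ?E = "{l. \<exists>v. v \<noteq> 0 \<and> A *v v = l *\<^sub>R v}"
  assume "infinite ?E"
  then obtain F where F: "F \<subseteq> ?E" "finite F" "card F = Suc CARD('n)"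
    using infinite_arbitrarily_large by blast
  define ev where "ev l = (SOME v. v \<noteq> 0 \<and> A *v v = l *\<^sub>R v)" for l
  have ev: "ev l \<noteq> 0 \<and> A *v ev l = l *\<^sub>R ev l" if "l \<in> F" for l
  proof -
    have "\<exists>v. v \<noteq> 0 \<and> A *v v = l *\<^sub>R v" using F(1) that by auto
    thus ?thesis unfolding ev_def by (rule someI_ex)
  qed
  have inj: "inj_on ev F"
  proof (rule inj_onI)
    fix a b assume ab: "a \<in> F" "b \<in> F" "ev a = ev b"
    hence "a *\<^sub>R ev a = b *\<^sub>R ev a" using ev[OF ab(1)] ev[OF ab(2)] by metis
    thus "a = b" using ev[OF ab(1)] by (simp add: scaleR_cancel_right)
  qed
  have orth: "ev a \<bullet> ev b = 0" if ab: "a \<in> F" "b \<in> F" "a \<noteq> b" for a b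
  proof -
    have "a * (ev a \<bullet> ev b) = (A *v ev a) \<bullet> ev b" using ev[OF ab(1)] by simp
    also have "\<dots> = ev b \<bullet> (A *v ev a)" by (simp add: inner_commute)
    also have "\<dots> = ev a \<bullet> (A *v ev b)" by (rule symm)
    also have "\<dots> = b * (ev a \<bullet> ev b)" using ev[OF ab(2)] by simp
    finally have "(a - b) * (ev a \<bullet> ev b) = 0" by (simp add: algebra_simps)
    thus ?thesis using ab(3) by simp
  qed
  have "pairwise orthogonal (ev ` F)"
    unfolding pairwise_def orthogonal_def using orth by auto
  moreover have "0 \<notin> ev ` F" using ev by auto
  ultimately have "independent (ev ` F)" by (rule pairwise_orthogonal_independent)
  hence "card (ev ` F) \<le> DIM(real^'n)" using independent_bound by blast
  hence "card F \<le> CARD('n)" using card_image[OF inj] by simp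
  thus False using F(3) by simp
qed

lemma eig_nonempty:
  fixes A :: "real^'n^'n"
  assumes symm: "\<And>u v. u \<bullet> (A *v v) = v \<bullet> (A *v u)"
  shows "\<exists>l v. v \<noteq> 0 \<and> A *v v = l *\<^sub>R v"
proof -
  let ?S = "sphere (0::real^'n) 1"
  have ne: "?S \<noteq> {}" by (simp add: sphere_def) (metis norm_axis_1 norm_minus_commute diff_zero)
  have "continuous_on ?S (\<lambda>v. v \<bullet> (A *v v))" by (intro continuous_intros)
  then obtain v0 where v0: "v0 \<in> ?S" "\<And>w. w \<in> ?S \<Longrightarrow> v0 \<bullet> (A *v v0) \<le> w \<bullet> (A *v w)"
    using continuous_attains_inf[OF compact_sphere ne] by blast
  define \<mu> where "\<mu> = v0 \<bullet> (A *v v0)"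
  have n1: "norm v0 = 1" using v0(1) by simp
  have vv: "v0 \<bullet> v0 = 1" using n1 by (simp add: power2_norm_eq_inner[symmetric])
  have ge: "w \<bullet> (A *v w) \<ge> \<mu> * (w \<bullet> w)" for w
  proof (cases "w = 0")
    case True thus ?thesis by simp
  next
    case False
    define w' where "w' = (1 / norm w) *\<^sub>R w"
    have "w' \<in> ?S" using False by (simp add: w'_def)
    hence "\<mu> \<le> w' \<bullet> (A *v w')" using v0(2) by (simp add: \<mu>_def)
    hence "\<mu> * (norm w)\<^sup>2 \<le> (w' \<bullet> (A *v w')) * (norm w)\<^sup>2" by (simp add: mult_right_mono)
    also have "(w' \<bullet> (A *v w')) * (norm w)\<^sup>2 = w \<bullet> (A *v w)"
      using False by (simp add: w'_def matrix_vector_mult_scaleR power2_eq_square)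
    finally show ?thesis by (simp add: power2_norm_eq_inner)
  qed
  define z where "z = A *v v0 - \<mu> *\<^sub>R v0"
  have "2 * (z \<bullet> z) = 0"
  proof (rule quad_zero[of 1])
    fix \<tau> :: real
    have "0 \<le> (v0 + \<tau> *\<^sub>R z) \<bullet> (A *v (v0 + \<tau> *\<^sub>R z)) - \<mu> * ((v0 + \<tau> *\<^sub>R z) \<bullet> (v0 + \<tau> *\<^sub>R z))"
      using ge[of "v0 + \<tau> *\<^sub>R z"] by simp
    also have "\<dots> = 2 * (z \<bullet> z) * \<tau> + (z \<bullet> (A *v z) - \<mu> * (z \<bullet> z)) * \<tau>\<^sup>2"
    proof -
      have s: "v0 \<bullet> (A *v z) = z \<bullet> (A *v v0)" by (rule symm)
      show ?thesis
        unfolding matrix_vector_right_distrib matrix_vector_mult_scaleR inner_add_left inner_add_right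
          inner_scaleR_left inner_scaleR_right s
        by (simp add: z_def \<mu>_def vv inner_diff_left inner_diff_right inner_commute power2_eq_square algebra_simps)
    qed
    finally show "0 \<le> 2 * (z \<bullet> z) * \<tau> + (z \<bullet> (A *v z) - \<mu> * (z \<bullet> z)) * \<tau>\<^sup>2" .
  qed simp
  hence "z = 0" by simp
  hence "A *v v0 = \<mu> *\<^sub>R v0" by (simp add: z_def)
  moreover have "v0 \<noteq> 0" using n1 by auto
  ultimately show ?thesis by blast
qed

lemma lambda_min_ge:
  fixes A :: "real^'n^'n"
  assumes symm: "\<And>u v. u \<bullet> (A *v v) = v \<bullet> (A *v u)"
    and psd: "\<And>v. v \<bullet> (A *v v) + e * (v \<bullet> v) \<ge> 0"
  shows "lambda_min A \<ge> - e"
proof -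
  let ?E = "{l. \<exists>v. v \<noteq> 0 \<and> A *v v = l *\<^sub>R v}"
  have "finite ?E" "?E \<noteq> {}" using eig_finite[OF symm] eig_nonempty[OF symm] by auto
  hence "Min ?E \<in> ?E" by (rule Min_in)
  then obtain v where v: "v \<noteq> 0" "A *v v = Min ?E *\<^sub>R v" by auto
  have "0 \<le> v \<bullet> (A *v v) + e * (v \<bullet> v)" by (rule psd)
  also have "\<dots> = (Min ?E + e) * (v \<bullet> v)" using v(2) by (simp add: algebra_simps)
  finally have "0 \<le> (Min ?E + e) * (v \<bullet> v)" .
  moreover have "v \<bullet> v > 0" using v(1) by simp
  ultimately have "Min ?E + e \<ge> 0" by (simp add: zero_le_mult_iff)
  thus ?thesis unfolding lambda_min_def by simp
qed



lemma interior_opt: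
  fixes gk s :: "real^'n" and A :: "real^'n^'n"
  assumes symm: "\<And>u v. u \<bullet> (A *v v) = v \<bullet> (A *v u)"
    and int: "norm s < \<delta>"
    and opt: "\<And>t. norm t \<le> \<delta> \<Longrightarrow> gk \<bullet> s + 1/2 * (s \<bullet> (A *v s)) + 1/2 * e * (norm s)\<^sup>2
                 \<le> gk \<bullet> t + 1/2 * (t \<bullet> (A *v t)) + 1/2 * e * (norm t)\<^sup>2"
  shows "gk + A *v s + e *\<^sub>R s = 0" "\<And>w. w \<bullet> (A *v w) + e * (w \<bullet> w) \<ge> 0"
proof -
  have expand: "0 \<le> (w \<bullet> (gk + A *v s + e *\<^sub>R s)) * \<tau> + ((w \<bullet> (A *v w) + e * (w \<bullet> w)) / 2) * \<tau>\<^sup>2"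
    if "\<bar>\<tau>\<bar> \<le> (\<delta> - norm s) / (norm w + 1)" for w \<tau>
  proof -
    have "\<bar>\<tau>\<bar> * (norm w + 1) \<le> \<delta> - norm s"
      using that by (smt (verit) norm_ge_zero pos_le_divide_eq)
    hence "\<bar>\<tau>\<bar> * norm w \<le> \<delta> - norm s" by (smt (verit) abs_ge_zero mult_left_mono distrib_left mult.right_neutral)
    hence "norm (s + \<tau> *\<^sub>R w) \<le> \<delta>"
      by (smt (verit) norm_scaleR norm_triangle_ineq)
    from opt[OF this]
    have "0 \<le> gk \<bullet> (s + \<tau> *\<^sub>R w) + 1/2 * ((s + \<tau> *\<^sub>R w) \<bullet> (A *v (s + \<tau> *\<^sub>R w))) + 1/2 * e * ((s + \<tau> *\<^sub>R w) \<bullet> (s + \<tau> *\<^sub>R w))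
       - (gk \<bullet> s + 1/2 * (s \<bullet> (A *v s)) + 1/2 * e * (s \<bullet> s))"
      by (simp add: power2_norm_eq_inner)
    also have "\<dots> = (w \<bullet> (gk + A *v s + e *\<^sub>R s)) * \<tau> + ((w \<bullet> (A *v w) + e * (w \<bullet> w)) / 2) * \<tau>\<^sup>2"
    proof -
      have sy: "s \<bullet> (A *v w) = w \<bullet> (A *v s)" by (rule symm)
      show ?thesis
        unfolding matrix_vector_right_distrib matrix_vector_mult_scaleR inner_add_left inner_add_right
          inner_scaleR_left inner_scaleR_right sy
        by (simp add: inner_commute power2_eq_square algebra_simps)
    qed
    finally show ?thesis .
  qed
  have eps: "(\<delta> - norm s) / (norm w + 1) > 0" for w :: "real^'n"
    using int by (smt (verit) divide_pos_pos norm_ge_zero)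
  define r where "r = gk + A *v s + e *\<^sub>R s"
  have "r \<bullet> r = 0"
    using quad_zero[OF eps[of r] expand[where w=r]] by (simp add: r_def)
  thus r0: "gk + A *v s + e *\<^sub>R s = 0" by (simp add: r_def)
  fix w :: "real^'n"
  let ?\<epsilon> = "(\<delta> - norm s) / (norm w + 1)"
  have "0 \<le> ((w \<bullet> (A *v w) + e * (w \<bullet> w)) / 2) * ?\<epsilon>\<^sup>2"
    using expand[where w=w and \<tau>="?\<epsilon>"] eps[of w] r0 by simp
  moreover have "?\<epsilon>\<^sup>2 > 0" using eps[of w] by (simp only: zero_less_power)
  ultimately show "w \<bullet> (A *v w) + e * (w \<bullet> w) \<ge> 0" by (simp add: zero_le_mult_iff)
qed



lemma arith1:
  fixes \<eta> \<gamma>1 \<delta>0 eH LH eg \<delta> A M :: real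
  assumes \<eta>: "0 < \<eta>" "\<eta> < 1" and \<gamma>1: "0 < \<gamma>1" and \<delta>0: "\<delta>0 > 0" and eH: "eH > 0" and LH: "LH > 0"
    and A: "A = max (1 / \<delta>0\<^sup>2) (max (LH\<^sup>2 / (9 * \<gamma>1\<^sup>2 * (1 - \<eta>)\<^sup>2)) (1 + 2 * LH))"
    and M: "M = max (1 / eH) (max (eH / eg\<^sup>2) (1 / eH ^ 3))"
    and d: "\<delta> \<ge> min \<delta>0 (3 * \<gamma>1 * (1 - \<eta>) * eH / LH)"
  shows "\<delta>\<^sup>2 * (eH * A * M) \<ge> 1"
proof -
  have A1: "A \<ge> 1 / \<delta>0\<^sup>2" "A \<ge> LH\<^sup>2 / (9 * \<gamma>1\<^sup>2 * (1 - \<eta>)\<^sup>2)" using A by auto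
  have M1: "M \<ge> 1 / eH" "M \<ge> 1 / eH ^ 3" using M by auto
  have Ap: "A > 0" using A1(1) \<delta>0 by (smt (verit) divide_pos_pos zero_less_power)
  have Mp: "M > 0" using M1(1) eH by (smt (verit) divide_pos_pos)
  define c where "c = 3 * \<gamma>1 * (1 - \<eta>) * eH / LH"
  have c0: "c > 0" using assms by (simp add: c_def)
  show ?thesis
  proof (cases "\<delta>0 \<le> c")
    case True
    hence dd: "\<delta> \<ge> \<delta>0" using d by (simp add: c_def)
    have "\<delta>\<^sup>2 \<ge> \<delta>0\<^sup>2" using dd \<delta>0 by (simp add: power_mono)
    moreover have "eH * A * M \<ge> eH * (1 / \<delta>0\<^sup>2) * (1 / eH)"
      using A1 M1 eH \<delta>0 Ap Mp by (intro mult_mono) auto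
    moreover have "eH * (1 / \<delta>0\<^sup>2) * (1 / eH) = 1 / \<delta>0\<^sup>2" using eH by simp
    ultimately have m: "\<delta>0\<^sup>2 \<le> \<delta>\<^sup>2" "1 / \<delta>0\<^sup>2 \<le> eH * A * M" by auto
    have "\<delta>0\<^sup>2 * (1 / \<delta>0\<^sup>2) \<le> \<delta>\<^sup>2 * (eH * A * M)"
      using m \<delta>0 by (intro mult_mono) auto
    thus ?thesis using \<delta>0 by simp
  next
    case False
    hence dd: "\<delta> \<ge> c" using d by (simp add: c_def)
    have m1: "\<delta>\<^sup>2 \<ge> c\<^sup>2" using dd c0 by (simp add: power_mono)
    have m2: "eH * A * M \<ge> eH * (LH\<^sup>2 / (9 * \<gamma>1\<^sup>2 * (1 - \<eta>)\<^sup>2)) * (1 / eH ^ 3)"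
      using A1 M1 eH Ap Mp by (intro mult_mono) auto
    have "\<delta>\<^sup>2 * (eH * A * M) \<ge> c\<^sup>2 * (eH * (LH\<^sup>2 / (9 * \<gamma>1\<^sup>2 * (1 - \<eta>)\<^sup>2)) * (1 / eH ^ 3))"
      by (rule mult_mono[OF m1 m2]) (use eH in auto)
    moreover have "c\<^sup>2 * (eH * (LH\<^sup>2 / (9 * \<gamma>1\<^sup>2 * (1 - \<eta>)\<^sup>2)) * (1 / eH ^ 3)) = 1"
    proof -
      define \<kappa> where "\<kappa> = \<gamma>1 * (1 - \<eta>)"
      have k0: "\<kappa> > 0" using \<gamma>1 \<eta> by (simp add: \<kappa>_def)
      have c': "c = 3 * \<kappa> * eH / LH" by (simp add: c_def \<kappa>_def)
      have k9: "9 * \<gamma>1\<^sup>2 * (1 - \<eta>)\<^sup>2 = 9 * \<kappa>\<^sup>2" by (simp add: \<kappa>_def power_mult_distrib)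
      show ?thesis unfolding c' k9 using k0 eH LH by (simp add: field_simps power2_eq_square power3_eq_cube)
    qed
    ultimately show ?thesis by linarith
  qed
qed

lemma arith2:
  fixes \<eta> \<gamma>1 \<delta>0 eH LH eg \<sigma> A M :: real
  assumes eg: "eg > 0" and eH: "eH > 0" and LH: "LH > 0" and s0: "\<sigma> \<ge> 0"
    and A: "A = max (1 / \<delta>0\<^sup>2) (max (LH\<^sup>2 / (9 * \<gamma>1\<^sup>2 * (1 - \<eta>)\<^sup>2)) (1 + 2 * LH))"
    and M: "M = max (1 / eH) (max (eH / eg\<^sup>2) (1 / eH ^ 3))"
    and big: "eg < LH / 2 * \<sigma>\<^sup>2 + eH * \<sigma>"
  shows "\<sigma>\<^sup>2 * (eH * A * M) \<ge> 1"
proof (rule ccontr)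
  assume "\<not> ?thesis"
  hence lt: "\<sigma>\<^sup>2 * (eH * A * M) < 1" by simp
  define u where "u = 1 + 2 * LH"
  have u1: "u \<ge> 1" using LH by (simp add: u_def)
  have A1: "A \<ge> u" using A by (auto simp: u_def)
  have M1: "M \<ge> eH / eg\<^sup>2" "M \<ge> 1 / eH ^ 3" using M by auto
  have s2: "\<sigma>\<^sup>2 \<ge> 0" by simp
  have eA: "eH * u \<le> eH * A" using A1 eH by simp
  have eA0: "0 \<le> eH * A" using A1 eH u1 by simp
  have "eH * u * (eH / eg\<^sup>2) \<le> eH * A * M"
    by (rule mult_mono[OF eA M1(1) eA0]) (use eH in simp)
  hence "\<sigma>\<^sup>2 * (eH * u * (eH / eg\<^sup>2)) \<le> \<sigma>\<^sup>2 * (eH * A * M)"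
    by (rule mult_left_mono) simp
  hence l1: "\<sigma>\<^sup>2 * (eH * u * (eH / eg\<^sup>2)) < 1" using lt by linarith
  have "\<sigma>\<^sup>2 * eH\<^sup>2 * u = \<sigma>\<^sup>2 * (eH * u * (eH / eg\<^sup>2)) * eg\<^sup>2" using eg by (simp add: field_simps power2_eq_square)
  also have "\<dots> < 1 * eg\<^sup>2" using l1 eg by (intro mult_strict_right_mono) auto
  finally have i1: "\<sigma>\<^sup>2 * eH\<^sup>2 * u < eg\<^sup>2" by simp
  have "eH * u * (1 / eH ^ 3) \<le> eH * A * M"
    by (rule mult_mono[OF eA M1(2) eA0]) (use eH in simp)
  hence "\<sigma>\<^sup>2 * (eH * u * (1 / eH ^ 3)) \<le> \<sigma>\<^sup>2 * (eH * A * M)"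
    by (rule mult_left_mono) simp
  hence l2: "\<sigma>\<^sup>2 * (eH * u * (1 / eH ^ 3)) < 1" using lt by linarith
  have "\<sigma>\<^sup>2 * u = \<sigma>\<^sup>2 * (eH * u * (1 / eH ^ 3)) * eH\<^sup>2" using eH by (simp add: field_simps power2_eq_square power3_eq_cube)
  also have "\<dots> < 1 * eH\<^sup>2" using l2 eH by (intro mult_strict_right_mono) auto
  finally have i2: "\<sigma>\<^sup>2 * u < eH\<^sup>2" by simp
  have "(\<sigma>\<^sup>2 * u) * (\<sigma>\<^sup>2 * u) * eH\<^sup>2 = (\<sigma>\<^sup>2 * eH\<^sup>2 * u) * (\<sigma>\<^sup>2 * u)" by (simp only: mult_ac)
  also have "\<dots> \<le> eg\<^sup>2 * (\<sigma>\<^sup>2 * u)" using i1 u1 by (intro mult_right_mono) auto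
  also have "\<dots> \<le> eg\<^sup>2 * eH\<^sup>2" using i2 by (intro mult_left_mono) auto
  finally have "(\<sigma>\<^sup>2 * u) * (\<sigma>\<^sup>2 * u) * eH\<^sup>2 \<le> eg\<^sup>2 * eH\<^sup>2" .
  hence "(\<sigma>\<^sup>2 * u) * (\<sigma>\<^sup>2 * u) \<le> eg\<^sup>2" using eH by (simp only: mult_le_cancel_right_pos zero_less_power)
  hence "(\<sigma>\<^sup>2 * u)\<^sup>2 \<le> eg\<^sup>2" by (simp only: power2_eq_square)
  hence i3: "\<sigma>\<^sup>2 * u \<le> eg" by (rule power2_le_imp_le) (use eg in linarith)
  define a where "a = eH * \<sigma>"
  have a0: "a \<ge> 0" using eH s0 by (simp add: a_def)
  have i4: "a\<^sup>2 * u < eg\<^sup>2" using i1 by (simp add: a_def power_mult_distrib mult_ac)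
  have i5: "a * (4 * u) \<le> (3 * u + 1) * eg"
  proof (rule ccontr)
    assume "\<not> ?thesis"
    hence "(3 * u + 1) * eg < a * (4 * u)" by simp
    hence "((3 * u + 1) * eg)\<^sup>2 < (a * (4 * u))\<^sup>2" using eg u1 by (intro power_strict_mono) auto
    moreover have "16 * u * eg\<^sup>2 \<le> ((3 * u + 1) * eg)\<^sup>2"
    proof -
      have q: "(3 * u + 1)\<^sup>2 = 16 * u + (9 * u - 1) * (u - 1)" by (simp add: power2_eq_square algebra_simps)
      have "(9 * u - 1) * (u - 1) \<ge> 0" using u1 by simp
      hence "16 * u \<le> (3 * u + 1)\<^sup>2" using q by linarith
      thus ?thesis by (simp add: power_mult_distrib mult_right_mono)
    qed
    moreover have "(a * (4 * u))\<^sup>2 = 16 * u * (a\<^sup>2 * u)" by (simp add: power2_eq_square)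
    ultimately have "16 * u * eg\<^sup>2 < 16 * u * (a\<^sup>2 * u)" by linarith
    hence "eg\<^sup>2 < a\<^sup>2 * u" using u1 by simp
    thus False using i4 by simp
  qed
  have "LH / 2 * \<sigma>\<^sup>2 = (u - 1) / 4 * \<sigma>\<^sup>2" by (simp add: u_def)
  have "LH / 2 * \<sigma>\<^sup>2 * (4 * u) \<le> (u - 1) * eg"
  proof -
    have "LH / 2 * \<sigma>\<^sup>2 * (4 * u) = (u - 1) * (\<sigma>\<^sup>2 * u)" by (simp add: u_def algebra_simps)
    also have "\<dots> \<le> (u - 1) * eg" using i3 u1 by (intro mult_left_mono) auto
    finally show ?thesis .
  qed
  hence "(LH / 2 * \<sigma>\<^sup>2 + eH * \<sigma>) * (4 * u) \<le> eg * (4 * u)"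
    using i5 by (simp add: a_def algebra_simps)
  hence "LH / 2 * \<sigma>\<^sup>2 + eH * \<sigma> \<le> eg" using u1 by simp
  thus False using big by simp
qed



theorem lemma2p4:
  fixes f :: "real^'n \<Rightarrow> real"
    and g :: "real^'n \<Rightarrow> real^'n"
    and H :: "real^'n \<Rightarrow> real^'n^'n"
    and U :: "(real^'n) set"
    and x s :: "nat \<Rightarrow> real^'n"
    and \<delta> :: "nat \<Rightarrow> real"
    and eg eH \<gamma>1 \<gamma>2 \<psi> \<delta>0 \<delta>max \<eta> flow Lg LH :: real
    and K S :: "nat set"
    and \<rho> :: "nat \<Rightarrow> real"
  assumes eg: "eg > 0" and eH: "eH > 0"
    and \<gamma>1: "0 < \<gamma>1" "\<gamma>1 < 1" and \<gamma>2: "1 \<le> \<gamma>2"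
    and \<psi>: "1 / \<gamma>2 < \<psi>" "\<psi> \<le> 1"
    and \<delta>0: "\<delta>0 > 0" and \<delta>max: "\<delta>max \<ge> \<delta>0"
    and \<eta>: "0 < \<eta>" "\<eta> < 1"
    and init: "\<delta> 0 = \<delta>0"
    and K_def: "K = {k. \<forall>j\<le>k. \<not> stationary g H eg eH (x j)}"
    and \<rho>_def: "\<And>k. \<rho> k = (f (x k) - f (x k + s k)) /
                    (tr_model f g H (x k) (x k) - tr_model f g H (x k) (x k + s k))"
    and S_def: "S = {k \<in> K. \<rho> k \<ge> \<eta>}"
    and step_feas: "\<And>k. k \<in> K \<Longrightarrow> norm (s k) \<le> \<delta> k"
    and step_opt: "\<And>k t. k \<in> K \<Longrightarrow> norm t \<le> \<delta> k \<Longrightarrow>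
         tr_model f g H (x k) (x k + s k) + (1/2) * eH * (norm (s k))\<^sup>2
           \<le> tr_model f g H (x k) (x k + t) + (1/2) * eH * (norm t)\<^sup>2"
    and succ: "\<And>k. k \<in> K \<Longrightarrow> \<rho> k \<ge> \<eta> \<Longrightarrow>
         x (Suc k) = x k + s k \<and>
         \<delta> (Suc k) = (if norm (s k) \<ge> \<psi> * \<delta> k then min (\<gamma>2 * \<delta> k) \<delta>max else \<delta> k)"
    and unsucc: "\<And>k. k \<in> K \<Longrightarrow> \<rho> k < \<eta> \<Longrightarrow>
         x (Suc k) = x k \<and> \<delta> (Suc k) = \<gamma>1 * norm (s k)"
    and low: "\<And>k. (\<forall>j<k. j \<in> K) \<Longrightarrow> flow \<le> f (x k)"
    and U_open: "open U"
    and segs: "\<And>k. k \<in> K \<Longrightarrow> closed_segment (x k) (x k + s k) \<subseteq> U"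
    and f_deriv: "\<And>y. y \<in> U \<Longrightarrow> (f has_derivative (\<lambda>h. g y \<bullet> h)) (at y)"
    and g_deriv: "\<And>y. y \<in> U \<Longrightarrow> (g has_derivative (\<lambda>h. H y *v h)) (at y)"
    and H_cont: "continuous_on U H"
    and Lg: "Lg > 0" and LH: "LH > 0"
    and g_lip: "\<And>y z. y \<in> U \<Longrightarrow> z \<in> U \<Longrightarrow> norm (g y - g z) \<le> Lg * norm (y - z)"
    and H_lip: "\<And>y z. y \<in> U \<Longrightarrow> z \<in> U \<Longrightarrow>
         onorm (\<lambda>v. (H y - H z) *v v) \<le> LH * norm (y - z)"
  shows "finite S \<and>
    real (card S) \<le>
      of_int \<lfloor>(4 * (f (x 0) - flow) / \<eta>) *
                 max (1 / \<delta>0\<^sup>2) (max (LH\<^sup>2 / (9 * \<gamma>1\<^sup>2 * (1 - \<eta>)\<^sup>2)) (1 + 2 * LH)) *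
                 max (1 / eH) (max (eH / eg\<^sup>2) (1 / eH ^ 3))\<rfloor> + 1"
proof -
  have LH0: "LH \<ge> 0" using LH by simp
  have Kpre: "\<And>k j. k \<in> K \<Longrightarrow> j \<le> k \<Longrightarrow> j \<in> K" using K_def by auto
  have Kstat: "\<And>k. k \<in> K \<Longrightarrow> \<not> stationary g H eg eH (x k)" using K_def by auto
  have xU: "\<And>k. k \<in> K \<Longrightarrow> x k \<in> U" using segs ends_in_segment(1) by blast
  have symmU: "\<And>y u v. y \<in> U \<Longrightarrow> u \<bullet> (H y *v v) = v \<bullet> (H y *v u)"
    using hess_symm[OF U_open _ f_deriv g_deriv H_lip LH0] by blast
  have SK: "S \<subseteq> K" using S_def by auto
  define dm where "dm k = tr_model f g H (x k) (x k) - tr_model f g H (x k) (x k + s k)" for k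
  have trm0: "tr_model f g H y y = f y" for y by (simp add: tr_model_def)
  have trm: "tr_model f g H y (y + t) = f y + g y \<bullet> t + 1/2 * (t \<bullet> (H y *v t))" for y t
    by (simp add: tr_model_def)
  have mdec: "dm k \<ge> eH / 2 * (norm (s k))\<^sup>2" if k: "k \<in> K" for k
  proof -
    have "0 \<le> \<delta> k" using step_feas[OF k] norm_ge_zero order_trans by blast
    hence "tr_model f g H (x k) (x k + s k) + 1/2 * eH * (norm (s k))\<^sup>2 \<le> f (x k)"
      using step_opt[OF k, of 0] by (simp add: trm0)
    thus ?thesis by (simp add: dm_def trm0)
  qed
  have rho_eq: "\<rho> k = (f (x k) - f (x k + s k)) / dm k" for k by (simp add: \<rho>_def dm_def)
  have succ_nz: "s k \<noteq> 0" if k: "k \<in> K" and r: "\<eta> \<le> \<rho> k" for k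
  proof
    assume "s k = 0"
    hence "\<rho> k = 0" by (simp add: rho_eq)
    thus False using r \<eta> by simp
  qed
  have dm_pos: "dm k > 0" if k: "k \<in> K" and s: "s k \<noteq> 0" for k
  proof -
    have "eH / 2 * (norm (s k))\<^sup>2 > 0" using eH s by simp
    thus ?thesis using mdec[OF k] by linarith
  qed
  have fdec: "f (x k) - f (x (Suc k)) \<ge> \<eta> * (eH / 2 * (norm (s k))\<^sup>2)" if k: "k \<in> K" and r: "\<eta> \<le> \<rho> k" for k
  proof -
    have dp: "dm k > 0" using dm_pos[OF k succ_nz[OF k r]] .
    have "\<eta> * dm k \<le> f (x k) - f (x k + s k)" using r dp by (simp add: rho_eq pos_le_divide_eq)
    moreover have "\<eta> * (eH / 2 * (norm (s k))\<^sup>2) \<le> \<eta> * dm k" using mdec[OF k] \<eta> by simp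
    moreover have "x (Suc k) = x k + s k" using succ[OF k r] by simp
    ultimately show ?thesis by simp
  qed
  have fmono: "f (x (Suc k)) \<le> f (x k)" if k: "k \<in> K" for k
  proof (cases "\<eta> \<le> \<rho> k")
    case True
    have "\<eta> * (eH / 2 * (norm (s k))\<^sup>2) \<ge> 0" using \<eta> eH by simp
    thus ?thesis using fdec[OF k True] by linarith
  next
    case False
    thus ?thesis using unsucc[OF k] by simp
  qed
  have small_succ: "\<eta> \<le> \<rho> k" if k: "k \<in> K" and s0: "s k \<noteq> 0" and sm: "norm (s k) < 3 * (1 - \<eta>) * eH / LH" for k
  proof -
    let ?\<sigma> = "norm (s k)"
    have ft: "\<bar>f (x k + s k) - tr_model f g H (x k) (x k + s k)\<bar> \<le> LH * ?\<sigma> ^ 3 / 6"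
      by (rule f_taylor[OF segs[OF k] f_deriv g_deriv H_lip])
    have dp: "dm k > 0" using dm_pos[OF k s0] .
    have num: "f (x k) - f (x k + s k) \<ge> dm k - LH * ?\<sigma> ^ 3 / 6"
      using ft unfolding dm_def trm0 abs_le_iff by linarith
    have sp: "?\<sigma> > 0" using s0 by simp
    have "LH * ?\<sigma> < 3 * (1 - \<eta>) * eH" using sm LH by (simp add: pos_less_divide_eq mult.commute)
    hence "LH * ?\<sigma> * ?\<sigma>\<^sup>2 < 3 * (1 - \<eta>) * eH * ?\<sigma>\<^sup>2" using sp by (intro mult_strict_right_mono) auto
    hence "LH * ?\<sigma> ^ 3 / 6 < (1 - \<eta>) * (eH / 2 * ?\<sigma>\<^sup>2)" by (simp add: power2_eq_square power3_eq_cube algebra_simps)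
    also have "\<dots> \<le> (1 - \<eta>) * dm k" using mdec[OF k] \<eta> by (intro mult_left_mono) auto
    finally have "\<eta> * dm k \<le> f (x k) - f (x k + s k)" using num by (simp add: algebra_simps)
    thus ?thesis using dp by (simp add: rho_eq pos_le_divide_eq)
  qed
  define \<delta>min where "\<delta>min = min \<delta>0 (3 * \<gamma>1 * (1 - \<eta>) * eH / LH)"
  have \<delta>min0: "\<delta>min > 0" using \<delta>0 \<gamma>1 \<eta> eH LH by (simp add: \<delta>min_def)
  have inv: "0 \<le> \<delta> k \<and> \<delta> k \<le> \<delta>max \<and> (\<delta> k = 0 \<or> \<delta>min \<le> \<delta> k)" if "\<forall>j<k. j \<in> K" for k
    using that
  proof (induction k)
    case 0
    thus ?case using init \<delta>0 \<delta>max by (simp add: \<delta>min_def)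
  next
    case (Suc k)
    have k: "k \<in> K" using Suc.prems by simp
    have IH: "0 \<le> \<delta> k \<and> \<delta> k \<le> \<delta>max \<and> (\<delta> k = 0 \<or> \<delta>min \<le> \<delta> k)" using Suc by simp
    have sd: "norm (s k) \<le> \<delta> k" by (rule step_feas[OF k])
    show ?case
    proof (cases "\<eta> \<le> \<rho> k")
      case True
      have s0: "s k \<noteq> 0" by (rule succ_nz[OF k True])
      hence "norm (s k) > 0" by simp
      hence dpos: "\<delta> k > 0" using sd by linarith
      have d: "\<delta> (Suc k) = (if norm (s k) \<ge> \<psi> * \<delta> k then min (\<gamma>2 * \<delta> k) \<delta>max else \<delta> k)"
        using succ[OF k True] by simp
      have "\<delta> k \<le> \<gamma>2 * \<delta> k" using \<gamma>2 dpos by simp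
      hence "\<delta> k \<le> \<delta> (Suc k) \<and> \<delta> (Suc k) \<le> \<delta>max" using d IH by auto
      thus ?thesis using IH dpos by auto
    next
      case False
      have d: "\<delta> (Suc k) = \<gamma>1 * norm (s k)" using unsucc[OF k] False by simp
      show ?thesis
      proof (cases "s k = 0")
        case True thus ?thesis using d IH by simp
      next
        case s0: False
        have "norm (s k) \<ge> 3 * (1 - \<eta>) * eH / LH" using small_succ[OF k s0] False by linarith
        hence "\<gamma>1 * norm (s k) \<ge> \<gamma>1 * (3 * (1 - \<eta>) * eH / LH)" using \<gamma>1 by (intro mult_left_mono) auto
        moreover have "\<gamma>1 * (3 * (1 - \<eta>) * eH / LH) = 3 * \<gamma>1 * (1 - \<eta>) * eH / LH" by simp
        ultimately have "\<delta>min \<le> \<delta> (Suc k)" using d unfolding \<delta>min_def by linarith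
        moreover have "\<delta> (Suc k) \<le> \<delta> k"
        proof -
          have "\<gamma>1 * norm (s k) \<le> 1 * norm (s k)" using \<gamma>1 by (intro mult_right_mono) auto
          thus ?thesis using d sd by linarith
        qed
        moreover have "\<delta> (Suc k) \<ge> 0" using d \<gamma>1 by simp
        ultimately show ?thesis using IH by auto
      qed
    qed
  qed
  have Kall: "\<forall>j<k. j \<in> K" if "k \<in> K" for k using Kpre[OF that] by simp
  have Sdelta: "\<delta>min \<le> \<delta> k" if kS: "k \<in> S" for k
  proof -
    have k: "k \<in> K" and r: "\<eta> \<le> \<rho> k" using kS S_def by auto
    have "s k \<noteq> 0" by (rule succ_nz[OF k r])
    hence "norm (s k) > 0" by simp
    hence "\<delta> k > 0" using step_feas[OF k] by linarith
    thus ?thesis using inv[OF Kall[OF k]] by auto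
  qed
  define A where "A = max (1 / \<delta>0\<^sup>2) (max (LH\<^sup>2 / (9 * \<gamma>1\<^sup>2 * (1 - \<eta>)\<^sup>2)) (1 + 2 * LH))"
  define M where "M = max (1 / eH) (max (eH / eg\<^sup>2) (1 / eH ^ 3))"
  have "A \<ge> 1 + 2 * LH" unfolding A_def by simp
  hence A0: "A > 0" using LH by linarith
  have "M \<ge> 1 / eH" unfolding M_def by simp
  moreover have "1 / eH > 0" using eH by simp
  ultimately have M0: "M > 0" by linarith
  define D where "D = \<eta> / (2 * A * M)"
  have D0: "D > 0" using \<eta> A0 M0 by (simp add: D_def)
  define G where "G = {k \<in> S. D \<le> f (x k) - f (x (Suc k))}"
  have GS: "G \<subseteq> S" by (auto simp: G_def)
  have good_of: "k \<in> G" if kS: "k \<in> S" and b: "1 \<le> (norm (s k))\<^sup>2 * (eH * A * M)" for k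
  proof -
    have k: "k \<in> K" and r: "\<eta> \<le> \<rho> k" using kS S_def by auto
    have "1 / (A * M) \<le> eH * (norm (s k))\<^sup>2" using b A0 M0
      by (simp add: divide_le_eq mult_ac)
    hence "\<eta> / 2 * (1 / (A * M)) \<le> \<eta> / 2 * (eH * (norm (s k))\<^sup>2)" using \<eta> by (intro mult_left_mono) auto
    hence "D \<le> \<eta> * (eH / 2 * (norm (s k))\<^sup>2)" by (simp add: D_def mult_ac)
    thus ?thesis using fdec[OF k r] kS by (simp add: G_def)
  qed
  have bdry_good: "k \<in> G" if kS: "k \<in> S" and b: "\<delta> k \<le> norm (s k)" for k
  proof (rule good_of[OF kS])
    have "norm (s k) \<ge> min \<delta>0 (3 * \<gamma>1 * (1 - \<eta>) * eH / LH)" using Sdelta[OF kS] b by (simp add: \<delta>min_def)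
    thus "1 \<le> (norm (s k))\<^sup>2 * (eH * A * M)"
      by (rule arith1[OF \<eta> \<gamma>1(1) \<delta>0 eH LH A_def M_def])
  qed
  have interior: "g (x k) + H (x k) *v s k + eH *\<^sub>R s k = 0 \<and> (\<forall>w. w \<bullet> (H (x k) *v w) + eH * (w \<bullet> w) \<ge> 0)"
    if k: "k \<in> K" and int: "norm (s k) < \<delta> k" for k
  proof -
    have opt: "g (x k) \<bullet> s k + 1/2 * (s k \<bullet> (H (x k) *v s k)) + 1/2 * eH * (norm (s k))\<^sup>2
        \<le> g (x k) \<bullet> t + 1/2 * (t \<bullet> (H (x k) *v t)) + 1/2 * eH * (norm t)\<^sup>2" if "norm t \<le> \<delta> k" for t
      using step_opt[OF k that] unfolding trm by simp
    show ?thesis using interior_opt[OF symmU[OF xU[OF k]] int opt] by blast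
  qed
  have nostat_bdry: "\<delta> j \<le> norm (s j)" if j: "j \<in> K" and gs: "norm (g (x j)) \<le> eg" for j
  proof (rule ccontr)
    assume "\<not> ?thesis"
    hence int: "norm (s j) < \<delta> j" by simp
    have "lambda_min (H (x j)) \<ge> - eH"
      by (rule lambda_min_ge[OF symmU[OF xU[OF j]]]) (use interior[OF j int] in blast)
    hence "stationary g H eg eH (x j)" using gs by (simp add: stationary_def)
    thus False using Kstat[OF j] by simp
  qed
  have int_good: "k \<in> G" if kS: "k \<in> S" and int: "norm (s k) < \<delta> k" and gb: "eg < norm (g (x (Suc k)))" for k
  proof -
    have k: "k \<in> K" and r: "\<eta> \<le> \<rho> k" using kS S_def by auto
    let ?\<sigma> = "norm (s k)"
    define rr where "rr = g (x k + s k) - g (x k) - H (x k) *v s k"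
    have gt: "\<bar>rr \<bullet> (g (x k + 1 *\<^sub>R s k) - g (x k) - 1 *\<^sub>R (H (x k) *v s k))\<bar>
        \<le> (LH * ?\<sigma>\<^sup>2 * norm rr) * 1 ^ Suc 1 / real (Suc 1)"
      by (rule grad_taylor[OF segs[OF k] g_deriv H_lip]) auto
    hence "norm rr * norm rr \<le> (LH * ?\<sigma>\<^sup>2 / 2) * norm rr"
      by (simp add: rr_def power2_norm_eq_inner[symmetric] power2_eq_square)
    hence rb: "norm rr \<le> LH * ?\<sigma>\<^sup>2 / 2"
      by (cases "norm rr = 0") (use LH in auto)
    have "g (x (Suc k)) = rr - eH *\<^sub>R s k"
      using interior[OF k int] succ[OF k r] unfolding rr_def
      by (simp add: algebra_simps eq_neg_iff_add_eq_0)
    hence "norm (g (x (Suc k))) \<le> norm rr + eH * ?\<sigma>"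
      using norm_triangle_ineq4[of rr "eH *\<^sub>R s k"] eH by simp
    hence "eg < LH / 2 * ?\<sigma>\<^sup>2 + eH * ?\<sigma>" using gb rb by simp
    hence "1 \<le> ?\<sigma>\<^sup>2 * (eH * A * M)"
      by (intro arith2[OF eg eH LH _ A_def M_def]) auto
    thus ?thesis by (rule good_of[OF kS])
  qed
  have chain: "x (Suc k + i) = x (Suc k)" if kS: "k \<in> S" and k'S: "k' \<in> S" and kk: "k < k'"
     and mn: "\<forall>j\<in>S. k < j \<longrightarrow> k' \<le> j" and ii: "Suc k + i \<le> k'" for k k' i
    using ii
  proof (induction i)
    case 0 thus ?case by simp
  next
    case (Suc i)
    let ?j = "Suc k + i"
    have jK: "?j \<in> K" using Kpre[of k' ?j] k'S SK Suc.prems by auto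
    have "?j \<notin> S" using mn Suc.prems by auto
    hence "\<rho> ?j < \<eta>" using jK S_def by auto
    hence "x (Suc ?j) = x ?j" using unsucc[OF jK] by simp
    thus ?case using Suc by simp
  qed
  have classify: "k \<in> G \<or> (\<forall>j\<in>S. j \<le> k) \<or> (\<exists>k'\<in>G. k < k' \<and> (\<forall>j\<in>S. k < j \<longrightarrow> k' \<le> j))"
    if kS: "k \<in> S" for k
  proof (cases "\<delta> k \<le> norm (s k)")
    case True thus ?thesis using bdry_good[OF kS] by simp
  next
    case False
    hence int: "norm (s k) < \<delta> k" by simp
    show ?thesis
    proof (cases "Suc k \<in> K")
      case False
      have "j \<le> k" if "j \<in> S" for j
      proof (rule ccontr)
        assume "\<not> j \<le> k"
        hence "Suc k \<le> j" by simp
        thus False using Kpre[of j "Suc k"] that SK False by auto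
      qed
      thus ?thesis by blast
    next
      case sK: True
      show ?thesis
      proof (cases "eg < norm (g (x (Suc k)))")
        case True thus ?thesis using int_good[OF kS int] by simp
      next
        case gs: False
        show ?thesis
        proof (cases "\<exists>j\<in>S. k < j")
          case False thus ?thesis by (meson not_le)
        next
          case True
          define k' where "k' = (LEAST j. j \<in> S \<and> k < j)"
          have k'1: "k' \<in> S \<and> k < k'" unfolding k'_def using True by (metis (mono_tags, lifting) LeastI)
          have k'2: "\<forall>j\<in>S. k < j \<longrightarrow> k' \<le> j" unfolding k'_def by (auto intro: Least_le)
          have "x (Suc k + (k' - Suc k)) = x (Suc k)"
            by (rule chain[OF kS _ _ k'2]) (use k'1 in auto)
          hence xk': "x k' = x (Suc k)" using k'1 by simp
          have k'K: "k' \<in> K" using k'1 SK by auto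
          have "\<delta> k' \<le> norm (s k')" using nostat_bdry[OF k'K] gs xk' by simp
          hence "k' \<in> G" using bdry_good k'1 by simp
          thus ?thesis using k'1 k'2 by blast
        qed
      qed
    qed
  qed
  have f0low: "flow \<le> f (x 0)" using low[of 0] by simp
  have sumF: "real (card F) * D \<le> f (x 0) - flow" if F: "F \<subseteq> G" "finite F" for F
  proof (cases "F = {}")
    case True thus ?thesis using f0low by simp
  next
    case False
    define N where "N = Suc (Max F)"
    have MF: "Max F \<in> F" using Max_in[OF F(2) False] .
    have allK: "\<forall>j<N. j \<in> K"
    proof (intro allI impI)
      fix j assume "j < N"
      hence "j \<le> Max F" by (simp add: N_def)
      moreover have "Max F \<in> K" using MF F(1) GS SK by auto
      ultimately show "j \<in> K" using Kpre by blast
    qed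
    have FN: "F \<subseteq> {..<N}" using F(2) by (auto simp: N_def less_Suc_eq_le)
    have "real (card F) * D = (\<Sum>j\<in>F. D)" by simp
    also have "\<dots> \<le> (\<Sum>j\<in>F. f (x j) - f (x (Suc j)))"
      by (rule sum_mono) (use F(1) in \<open>auto simp: G_def\<close>)
    also have "\<dots> \<le> (\<Sum>j<N. f (x j) - f (x (Suc j)))"
      by (rule sum_mono2[OF _ FN]) (use fmono allK in auto)
    also have "\<dots> = f (x 0) - f (x N)" by (rule sum_lessThan_telescope')
    also have "\<dots> \<le> f (x 0) - flow" using low[OF allK] by simp
    finally show ?thesis .
  qed
  have finG: "finite G"
  proof (rule ccontr)
    assume "infinite G"
    then obtain F where F: "F \<subseteq> G" "finite F" "card F = nat \<lceil>(f (x 0) - flow) / D\<rceil> + 1"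
      using infinite_arbitrarily_large by blast
    have "real (card F) \<ge> (f (x 0) - flow) / D + 1"
      using F(3) by (simp add: of_nat_nat) (linarith)
    hence "real (card F) * D \<ge> ((f (x 0) - flow) / D + 1) * D" using D0 by (intro mult_right_mono) auto
    moreover have "((f (x 0) - flow) / D + 1) * D = f (x 0) - flow + D" using D0 by (simp add: field_simps)
    ultimately have "real (card F) * D \<ge> f (x 0) - flow + D" by linarith
    thus False using sumF[OF F(1,2)] D0 by simp
  qed
  have cardG: "real (card G) * D \<le> f (x 0) - flow" using sumF[OF order_refl finG] .
  define P where "P = {k \<in> S. k \<notin> G \<and> \<not> (\<forall>j\<in>S. j \<le> k)}"
  define T where "T = {k \<in> S. \<forall>j\<in>S. j \<le> k}"
  define nx where "nx k = (LEAST j. j \<in> S \<and> k < j)" for k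
  have nxG: "nx k \<in> G" if kP: "k \<in> P" for k
  proof -
    have kS: "k \<in> S" "k \<notin> G" "\<not> (\<forall>j\<in>S. j \<le> k)" using kP by (auto simp: P_def)
    then obtain k' where k': "k' \<in> G" "k < k'" "\<forall>j\<in>S. k < j \<longrightarrow> k' \<le> j" using classify[OF kS(1)] by blast
    have "nx k = k'" unfolding nx_def
      by (rule Least_equality) (use k' GS in auto)
    thus ?thesis using k' by simp
  qed
  have nx_prop: "nx k \<in> S \<and> k < nx k" "\<And>j. j \<in> S \<Longrightarrow> k < j \<Longrightarrow> nx k \<le> j" if kP: "k \<in> P" for k
  proof -
    have "\<exists>j\<in>S. k < j" using kP by (auto simp: P_def not_le)
    thus "nx k \<in> S \<and> k < nx k" unfolding nx_def by (metis (mono_tags, lifting) LeastI)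
    show "\<And>j. j \<in> S \<Longrightarrow> k < j \<Longrightarrow> nx k \<le> j" unfolding nx_def by (auto intro: Least_le)
  qed
  have inj: "inj_on nx P"
  proof (rule inj_onI)
    fix a b assume ab: "a \<in> P" "b \<in> P" "nx a = nx b"
    show "a = b"
    proof (rule ccontr)
      assume "a \<noteq> b"
      hence "a < b \<or> b < a" by auto
      thus False
      proof
        assume "a < b"
        hence "nx a \<le> b" using nx_prop(2)[OF ab(1)] ab(2) by (auto simp: P_def)
        thus False using nx_prop(1)[OF ab(2)] ab(3) by simp
      next
        assume "b < a"
        hence "nx b \<le> a" using nx_prop(2)[OF ab(2)] ab(1) by (auto simp: P_def)
        thus False using nx_prop(1)[OF ab(1)] ab(3) by simp
      qed
    qed
  qed
  have nxPG: "nx ` P \<subseteq> G" using nxG by auto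
  have finP: "finite P" using finite_imageD[OF finite_subset[OF nxPG finG] inj] .
  have cardP: "card P \<le> card G" by (rule card_inj_on_le[OF inj nxPG finG])
  have cardT: "card T \<le> 1" and finT: "finite T"
  proof -
    have "card T \<le> 1 \<and> finite T"
    proof (cases "T = {}")
      case True thus ?thesis by simp
    next
      case False
      then obtain t where t: "t \<in> T" by auto
      have "T \<subseteq> {t}"
      proof
        fix t' assume "t' \<in> T"
        thus "t' \<in> {t}" using t by (auto simp: T_def intro: order.antisym)
      qed
      thus ?thesis using card_mono[of "{t}" T] finite_subset[of T "{t}"] by simp
    qed
    thus "card T \<le> 1" "finite T" by auto
  qed
  have Seq: "S = G \<union> P \<union> T" using GS by (auto simp: P_def T_def)
  have finS: "finite S" unfolding Seq using finG finP finT by simp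
  have "card S \<le> card G + card P + card T"
    unfolding Seq by (meson card_Un_le le_trans add_le_mono order_refl)
  hence cS: "card S \<le> 2 * card G + 1" using cardP cardT by simp
  define X where "X = (4 * (f (x 0) - flow) / \<eta>) * A * M"
  have "real (card G) \<le> (f (x 0) - flow) / D" using cardG D0 by (simp add: pos_le_divide_eq)
  hence "real (2 * card G) \<le> X" using \<eta> A0 M0 by (simp add: X_def D_def field_simps)
  hence "int (2 * card G) \<le> \<lfloor>X\<rfloor>" by (simp add: le_floor_iff)
  hence r1: "real (2 * card G) \<le> of_int \<lfloor>X\<rfloor>" by (metis of_int_le_iff of_int_of_nat_eq)
  have "real (card S) \<le> real (2 * card G + 1)" using cS by (simp only: of_nat_le_iff)
  hence "real (card S) \<le> of_int \<lfloor>X\<rfloor> + 1" using r1 by simp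
  thus ?thesis using finS unfolding X_def A_def M_def by simp
qed


end
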